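(* The free semigroup $\{a,b\}^+$ on two generators is neither left fairly amenable nor right fairly amenable.
   Context: For a semigroup $U$, $s\in U$, $A\subseteq U$: $s$ acts injectively on the left (right) of $A$ if $x\mapsto sx$ ($x\mapsto xs$) is injective on $A$. A finitely-additive probability measure on $U$ is $\mu:\mathcal P(U)\to[0,1]$ with $\mu(U)=1$, additive on disjoint sets; it is left fairly invariant if $\mu(sA)=\mu(A)$ whenever $s$ acts injectively on the left of $A$ (right fairly invariant analogously with $As$). $U$ is left (right) fairly amenable if such a measure exists. *)

theory Defs
  imports Complex_Main
begin

definition semigroup_on :: "'a set \<Rightarrow> ('a \<Rightarrow> 'a \<Rightarrow> 'a) \<Rightarrow> bool" where
  "semigroup_on U mult \<longleftrightarrow>
     (\<forall>x\<in>U. \<forall>y\<in>U. mult x y \<in> U) \<and>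
     (\<forall>x\<in>U. \<forall>y\<in>U. \<forall>z\<in>U. mult (mult x y) z = mult x (mult y z))"

definition fa_prob_measure :: "'a set \<Rightarrow> ('a set \<Rightarrow> real) \<Rightarrow> bool" where
  "fa_prob_measure U \<mu> \<longleftrightarrow>
     (\<forall>A. A \<subseteq> U \<longrightarrow> 0 \<le> \<mu> A \<and> \<mu> A \<le> 1) \<and>
     \<mu> U = 1 \<and>
     (\<forall>A B. A \<subseteq> U \<longrightarrow> B \<subseteq> U \<longrightarrow> A \<inter> B = {} \<longrightarrow> \<mu> (A \<union> B) = \<mu> A + \<mu> B)"

definition left_fairly_invariant ::
  "'a set \<Rightarrow> ('a \<Rightarrow> 'a \<Rightarrow> 'a) \<Rightarrow> ('a set \<Rightarrow> real) \<Rightarrow> bool" where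
  "left_fairly_invariant U mult \<mu> \<longleftrightarrow>
     (\<forall>s\<in>U. \<forall>A. A \<subseteq> U \<longrightarrow> inj_on (\<lambda>x. mult s x) A \<longrightarrow>
        \<mu> ((\<lambda>x. mult s x) ` A) = \<mu> A)"

definition right_fairly_invariant ::
  "'a set \<Rightarrow> ('a \<Rightarrow> 'a \<Rightarrow> 'a) \<Rightarrow> ('a set \<Rightarrow> real) \<Rightarrow> bool" where
  "right_fairly_invariant U mult \<mu> \<longleftrightarrow>
     (\<forall>s\<in>U. \<forall>A. A \<subseteq> U \<longrightarrow> inj_on (\<lambda>x. mult x s) A \<longrightarrow>
        \<mu> ((\<lambda>x. mult x s) ` A) = \<mu> A)"

definition left_fairly_amenable :: "'a set \<Rightarrow> ('a \<Rightarrow> 'a \<Rightarrow> 'a) \<Rightarrow> bool" where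
  "left_fairly_amenable U mult \<longleftrightarrow>
     (\<exists>\<mu>. fa_prob_measure U \<mu> \<and> left_fairly_invariant U mult \<mu>)"

definition right_fairly_amenable :: "'a set \<Rightarrow> ('a \<Rightarrow> 'a \<Rightarrow> 'a) \<Rightarrow> bool" where
  "right_fairly_amenable U mult \<longleftrightarrow>
     (\<exists>\<mu>. fa_prob_measure U \<mu> \<and> right_fairly_invariant U mult \<mu>)"

text \<open>The free semigroup on two generators {a,b}: nonempty words over bool
  (False = a, True = b) under concatenation.\<close>

definition free_sg2 :: "bool list set" where
  "free_sg2 = {w. w \<noteq> []}"

lemma semigroup_free_sg2: "semigroup_on free_sg2 (@)"
  by (auto simp: semigroup_on_def free_sg2_def)

end

theory Submission
  imports Defs
begin

lemma left_no: "\<not> left_fairly_amenable free_sg2 (@)"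
proof
  assume "left_fairly_amenable free_sg2 (@)"
  then obtain \<mu> where m: "fa_prob_measure free_sg2 \<mu>" and l: "left_fairly_invariant free_sg2 (@) \<mu>"
    unfolding left_fairly_amenable_def by blast
  define A where "A = (\<lambda>x. [False] @ x) ` free_sg2"
  define B where "B = (\<lambda>x. [True] @ x) ` free_sg2"
  have sA: "[False] \<in> free_sg2" "[True] \<in> free_sg2" by (auto simp: free_sg2_def)
  have "\<mu> A = 1" using l m sA unfolding left_fairly_invariant_def fa_prob_measure_def A_def
    by (metis inj_on_def same_append_eq subset_refl)
  moreover have "\<mu> B = 1" using l m sA unfolding left_fairly_invariant_def fa_prob_measure_def B_def
    by (metis inj_on_def same_append_eq subset_refl)
  moreover have AU: "A \<subseteq> free_sg2" "B \<subseteq> free_sg2" "A \<inter> B = {}"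
    by (auto simp: A_def B_def free_sg2_def)
  ultimately have "\<mu> (A \<union> B) = 2" using m unfolding fa_prob_measure_def by auto
  moreover have "A \<union> B \<subseteq> free_sg2" using AU by blast
  hence "\<mu> (A \<union> B) \<le> 1" using m unfolding fa_prob_measure_def by blast
  ultimately show False by simp
qed

lemma right_no: "\<not> right_fairly_amenable free_sg2 (@)"
proof
  assume "right_fairly_amenable free_sg2 (@)"
  then obtain \<mu> where m: "fa_prob_measure free_sg2 \<mu>" and l: "right_fairly_invariant free_sg2 (@) \<mu>"
    unfolding right_fairly_amenable_def by blast
  define A where "A = (\<lambda>x. x @ [False]) ` free_sg2"
  define B where "B = (\<lambda>x. x @ [True]) ` free_sg2"
  have sA: "[False] \<in> free_sg2" "[True] \<in> free_sg2" by (auto simp: free_sg2_def)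
  have "\<mu> A = 1" using l m sA unfolding right_fairly_invariant_def fa_prob_measure_def A_def
    by (metis inj_on_def append_same_eq subset_refl)
  moreover have "\<mu> B = 1" using l m sA unfolding right_fairly_invariant_def fa_prob_measure_def B_def
    by (metis inj_on_def append_same_eq subset_refl)
  moreover have AU: "A \<subseteq> free_sg2" "B \<subseteq> free_sg2" "A \<inter> B = {}"
    by (auto simp: A_def B_def free_sg2_def)
  ultimately have "\<mu> (A \<union> B) = 2" using m unfolding fa_prob_measure_def by auto
  moreover have "A \<union> B \<subseteq> free_sg2" using AU by blast
  hence "\<mu> (A \<union> B) \<le> 1" using m unfolding fa_prob_measure_def by blast
  ultimately show False by simp
qed

theorem mainTheorem19:
  shows "\<not> left_fairly_amenable free_sg2 (@) \<and> \<not> right_fairly_amenable free_sg2 (@)"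
  using left_no right_no by blast

end
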